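(* Let $N\ge 2$ and let $p$ be a polynomial with complex coefficients of degree at most $N-1$. Let $w_1,\ldots,w_{2N-1}\in\mathbb{T}$ be mutually distinct points and let $z_1,\ldots,z_{2N-3}\in\mathbb{T}$ be mutually distinct points. Then the $4N-4$ values $$|p(w_j)|,\ j=1,\ldots,2N-1,\qquad\text{and}\qquad |p'(z_k)|,\ k=1,\ldots,2N-3,$$ determine $p$ uniquely up to a global phase factor. That is, if $q$ is another complex polynomial of degree at most $N-1$ with $|q(w_j)|=|p(w_j)|$ for all $j$ and $|q'(z_k)|=|p'(z_k)|$ for all $k$, then $q=e^{i\varphi}p$ for some $\varphi\in\mathbb{R}$.
   Context: $\mathbb{T}=\{z\in\mathbb{C}:|z|=1\}$ denotes the unit circle and $p'$ the derivative of $p$. *)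

theory Defs
  imports "HOL-Analysis.Analysis" "HOL-Computational_Algebra.Polynomial"
begin

end

theory Submission
  imports Defs "HOL-Complex_Analysis.Complex_Analysis"
begin

definition rv :: "nat \<Rightarrow> complex poly \<Rightarrow> complex poly" where
  "rv n r = (\<Sum>k\<le>n. monom (cnj (coeff r (n-k))) k)"

lemma coeff_rv: "coeff (rv n r) j = (if j \<le> n then cnj (coeff r (n-j)) else 0)"
  unfolding rv_def coeff_sum by (simp add: coeff_monom)

lemma degree_rv: "degree (rv n r) \<le> n"
  by (rule degree_le) (simp add: coeff_rv)

lemma rv_0[simp]: "rv n 0 = 0"
  by (rule poly_eqI) (simp add: coeff_rv)

lemma rv_smult: "rv n (smult c r) = smult (cnj c) (rv n r)"
  by (rule poly_eqI) (simp add: coeff_rv)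

lemma rv_eq_0: assumes "rv n r = 0" "degree r \<le> n" shows "r = 0"
proof (rule poly_eqI)
  fix i
  show "coeff r i = coeff 0 i"
  proof (cases "i \<le> n")
    case True
    have "coeff (rv n r) (n - i) = 0" using assms by simp
    thus ?thesis using True by (simp add: coeff_rv)
  next
    case False thus ?thesis using assms(2) by (simp add: coeff_eq_0)
  qed
qed

lemma rv_pCons: assumes "n \<ge> 1" shows "rv n (pCons 0 r) = rv (n-1) r"
proof (rule poly_eqI)
  fix j show "coeff (rv n (pCons 0 r)) j = coeff (rv (n-1) r) j"
    using assms apply (cases "n - j") apply (auto simp: coeff_rv coeff_pCons Suc_diff_le split: nat.splits)
    apply (rule arg_cong[where f="coeff r"]) apply arith done
qed

lemma coeff_v: "coeff (pCons 0 (pderiv p)) i = of_nat i * coeff p i"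
  by (cases i) (simp_all add: coeff_pderiv)

lemma pderiv_rv:
  "pCons 0 (pderiv (rv n p)) = smult (of_nat n) (rv n p) - rv n (pCons 0 (pderiv p))"
proof (rule poly_eqI)
  fix j
  show "coeff (pCons 0 (pderiv (rv n p))) j = coeff (smult (of_nat n) (rv n p) - rv n (pCons 0 (pderiv p))) j"
    apply (simp only: coeff_v coeff_diff coeff_smult coeff_rv)
    apply (auto simp: of_nat_diff algebra_simps)
    done
qed

lemma poly_rv: assumes "norm z = 1" "degree r \<le> n"
  shows "poly (rv n r) z = z^n * cnj (poly r z)"
proof -
  have zc: "z * cnj z = 1" using assms(1)
    by (metis complex_norm_square mult.commute of_real_1 power_one)
  have pr: "poly r z = (\<Sum>i\<le>n. coeff r i * z^i)"
    using poly_as_sum_of_monoms'[OF assms(2)]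
    by (metis (no_types, lifting) poly_monom poly_sum sum.cong)
  have "z^n * cnj (poly r z) = (\<Sum>i\<le>n. cnj (coeff r i) * z^(n-i))"
    unfolding pr cnj_sum sum_distrib_left
  proof (rule sum.cong[OF refl])
    fix i assume "i \<in> {..n}"
    hence "z^n = z^(n-i) * z^i" by (simp add: power_add[symmetric])
    hence "z^n * cnj z ^ i = z^(n-i) * (z * cnj z)^i" by (simp add: power_mult_distrib)
    thus "z ^ n * cnj (coeff r i * z ^ i) = cnj (coeff r i) * z ^ (n - i)"
      using zc by simp
  qed
  also have "\<dots> = (\<Sum>k\<le>n. cnj (coeff r (n-k)) * z^k)"
    by (rule sum.reindex_bij_witness[where i="\<lambda>k. n-k" and j="\<lambda>k. n-k"]) auto
  also have "\<dots> = poly (rv n r) z"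
    unfolding rv_def poly_sum poly_monom ..
  finally show ?thesis ..
qed

lemma poly_A: assumes "norm z = 1" "degree r \<le> n"
  shows "poly (r * rv n r) z = z^n * of_real ((norm (poly r z))^2)"
proof -
  have "complex_of_real ((norm (poly r z))^2) = poly r z * cnj (poly r z)"
    by (metis complex_norm_square)
  thus ?thesis using poly_rv[OF assms] by (simp add: mult.commute mult.left_commute)
qed

lemma sample_zero:
  fixes D :: "complex poly"
  assumes "degree D \<le> 2*m" "inj_on w {1..2*m+1}" "\<And>j. j \<in> {1..2*m+1} \<Longrightarrow> poly D (w j) = 0"
  shows "D = 0"
proof (rule poly_eqI_degree[where A="w ` {1..2*m+1}"])
  show "\<And>x. x \<in> w ` {1..2 * m + 1} \<Longrightarrow> poly D x = poly 0 x" using assms(3) by auto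
  have "card (w ` {1..2*m+1}) = 2*m+1" using card_image[OF assms(2)] by simp
  thus "degree D < card (w ` {1..2 * m + 1})" "degree 0 < card (w ` {1..2 * m + 1})"
    using assms(1) by auto
qed

lemma lead_pderiv: "lead_coeff (pderiv p) = of_nat (degree p) * lead_coeff (p :: complex poly)"
proof (cases "degree p")
  case 0 thus ?thesis using pderiv_eq_0_iff[of p] by simp
next
  case (Suc k)
  thus ?thesis by (simp add: degree_pderiv coeff_pderiv)
qed

lemma deg_eq:
  fixes p q :: "complex poly"
  assumes "p \<noteq> 0" "q \<noteq> 0" "pderiv p * q = pderiv q * p"
  shows "degree p = degree q"
proof (cases "degree p = 0 \<or> degree q = 0")
  case True
  then show ?thesis
  proof
    assume "degree p = 0"
    hence "pderiv p = 0" using pderiv_eq_0_iff by blast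
    hence "pderiv q = 0" using assms by simp
    thus ?thesis using \<open>degree p = 0\<close> pderiv_eq_0_iff by metis
  next
    assume "degree q = 0"
    hence "pderiv q = 0" using pderiv_eq_0_iff by blast
    hence "pderiv p = 0" using assms by simp
    thus ?thesis using \<open>degree q = 0\<close> pderiv_eq_0_iff by metis
  qed
next
  case False
  have "lead_coeff (pderiv p * q) = lead_coeff (pderiv q * p)" using assms by simp
  hence "of_nat (degree p) * lead_coeff p * lead_coeff q = of_nat (degree q) * lead_coeff q * lead_coeff p"
    by (simp add: lead_coeff_mult lead_pderiv)
  hence "(of_nat (degree p) :: complex) = of_nat (degree q)" using assms by simp
  thus ?thesis by simp
qed

lemma const_mult:
  fixes p q :: "complex poly"
  assumes "p \<noteq> 0" "pderiv p * q = pderiv q * p"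
  shows "\<exists>c. q = smult c p"
proof (cases "q = 0")
  case True thus ?thesis by (intro exI[of _ 0]) simp
next
  case False
  have dq: "degree q = degree p" using deg_eq[OF assms(1) False assms(2)] by simp
  define c where "c = lead_coeff q / lead_coeff p"
  define d where "d = q - smult c p"
  have "pderiv p * d = pderiv d * p"
    unfolding d_def using assms(2) by (simp add: pderiv_diff pderiv_smult algebra_simps)
  have "d = 0"
  proof (rule ccontr)
    assume "d \<noteq> 0"
    hence "degree p = degree d" using deg_eq[OF assms(1) _ \<open>pderiv p * d = pderiv d * p\<close>] by simp
    moreover have "coeff d (degree p) = 0" unfolding d_def c_def using dq assms(1) by simp
    ultimately show False using \<open>d \<noteq> 0\<close> by simp
  qed
  thus ?thesis unfolding d_def by auto
qed

lemma pc: "pCons 0 (x * y) = (x :: complex poly) * pCons 0 y"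
  by (metis mult.commute mult_pCons_left smult_0_left add_0)

definition vv :: "complex poly \<Rightarrow> complex poly" where "vv r = pCons 0 (pderiv r)"
definition RR :: "nat \<Rightarrow> complex poly \<Rightarrow> complex poly" where
  "RR n r = vv r * rv n r + r * rv n (vv r)"
definition II :: "nat \<Rightarrow> complex poly \<Rightarrow> complex poly" where
  "II n r = vv r * rv n r - r * rv n (vv r)"

lemma II_eq: "II n r = pCons 0 (pderiv (r * rv n r)) - smult (of_nat n) (r * rv n r)"
proof -
  have "pCons 0 (pderiv (r * rv n r)) = pCons 0 (r * pderiv (rv n r)) + pCons 0 (rv n r * pderiv r)"
    unfolding pderiv_mult by (metis add.right_neutral add_pCons)
  also have "\<dots> = r * pCons 0 (pderiv (rv n r)) + rv n r * vv r"
    unfolding vv_def pc ..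
  also have "\<dots> = r * (smult (of_nat n) (rv n r) - rv n (vv r)) + rv n r * vv r"
    unfolding pderiv_rv vv_def ..
  finally show ?thesis unfolding II_def by (simp add: algebra_simps)
qed

lemma coeff_RR: "coeff (RR n r) n = of_real (2 * (\<Sum>i\<le>n. real i * (norm (coeff r i))^2))"
proof -
  have "coeff (RR n r) n = (\<Sum>i\<le>n. of_nat i * coeff r i * cnj (coeff r i) + coeff r i * cnj (of_nat i * coeff r i))"
    unfolding RR_def coeff_add coeff_mult sum.distrib[symmetric]
    by (rule sum.cong) (auto simp: coeff_rv vv_def coeff_v)
  also have "\<dots> = (\<Sum>i\<le>n. of_real (2 * (real i * (norm (coeff r i))^2)))"
  proof (rule sum.cong[OF refl])
    fix i
    have "complex_of_real ((norm (coeff r i))^2) = coeff r i * cnj (coeff r i)"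
      by (metis complex_norm_square)
    thus "of_nat i * coeff r i * cnj (coeff r i) + coeff r i * cnj (of_nat i * coeff r i) =
      complex_of_real (2 * (real i * (cmod (coeff r i))\<^sup>2))" by simp
  qed
  also have "\<dots> = of_real (2 * (\<Sum>i\<le>n. real i * (norm (coeff r i))^2))"
    by (simp add: sum_distrib_left)
  finally show ?thesis .
qed

lemma RR_zero: assumes "degree r \<le> n" "(\<Sum>i\<le>n. real i * (norm (coeff r i))^2) = 0"
  shows "RR n r = 0"
proof -
  have "\<forall>i\<in>{..n}. real i * (norm (coeff r i))^2 = 0"
    using assms(2) by (subst sum_nonneg_eq_0_iff[symmetric]) auto
  hence H: "\<And>i. i \<le> n \<Longrightarrow> i = 0 \<or> coeff r i = 0" by auto
  have "vv r = 0"
  proof (intro poly_eqI)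
    fix i show "coeff (vv r) i = coeff 0 i"
      using assms(1) H[of i] by (cases "i \<le> n") (auto simp: vv_def coeff_v coeff_eq_0)
  qed
  thus ?thesis unfolding RR_def by simp
qed

lemma RR_nonneg: "0 \<le> (\<Sum>i\<le>n. real i * (norm (coeff r i))^2)"
  by (intro sum_nonneg) auto

lemma degA: "degree r \<le> n \<Longrightarrow> degree (r * rv n r) \<le> 2*n"
  by (metis (no_types, opaque_lifting) add_le_mono degree_mult_le degree_rv le_trans mult_2)

theorem theorem1p1:
  fixes N :: nat and p q :: "complex poly"
    and w :: "nat \<Rightarrow> complex" and z :: "nat \<Rightarrow> complex"
  assumes "N \<ge> 2"
    and "degree p \<le> N - 1" and "degree q \<le> N - 1"
    and "\<And>j. j \<in> {1..2*N-1} \<Longrightarrow> norm (w j) = 1"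
    and "inj_on w {1..2*N-1}"
    and "\<And>k. k \<in> {1..2*N-3} \<Longrightarrow> norm (z k) = 1"
    and "inj_on z {1..2*N-3}"
    and "\<And>j. j \<in> {1..2*N-1} \<Longrightarrow> norm (poly q (w j)) = norm (poly p (w j))"
    and "\<And>k. k \<in> {1..2*N-3} \<Longrightarrow> norm (poly (pderiv q) (z k)) = norm (poly (pderiv p) (z k))"
  shows "\<exists>\<phi>::real. q = smult (exp (\<i> * complex_of_real \<phi>)) p"
proof -
  define n where "n = N - 1"
  have n1: "n \<ge> 1" using assms(1) unfolding n_def by simp
  have e1: "2*N-1 = 2*n+1" and e2: "2*N-3 = 2*(n-1)+1" using assms(1) unfolding n_def by auto
  have dp: "degree p \<le> n" and dq: "degree q \<le> n" using assms(2,3) n_def by auto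
  have dp': "degree (pderiv p) \<le> n - 1" and dq': "degree (pderiv q) \<le> n - 1"
    using dp dq by (auto simp: degree_pderiv)
  have hA: "q * rv n q = p * rv n p"
  proof -
    have "q * rv n q - p * rv n p = 0"
    proof (rule sample_zero[where m=n and w=w])
      show "degree (q * rv n q - p * rv n p) \<le> 2 * n"
        using degA[OF dp] degA[OF dq] degree_diff_le by blast
      show "inj_on w {1..2 * n + 1}" using assms(5) e1 by simp
      fix j assume j: "j \<in> {1..2*n+1}"
      hence "norm (w j) = 1" "norm (poly q (w j)) = norm (poly p (w j))"
        using assms(4,8) e1 by auto
      thus "poly (q * rv n q - p * rv n p) (w j) = 0"
        using poly_A[OF _ dp] poly_A[OF _ dq] by simp
    qed
    thus ?thesis by simp
  qed
  have hB: "pderiv q * rv (n-1) (pderiv q) = pderiv p * rv (n-1) (pderiv p)"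
  proof -
    have "pderiv q * rv (n-1) (pderiv q) - pderiv p * rv (n-1) (pderiv p) = 0"
    proof (rule sample_zero[where m="n-1" and w=z])
      show "degree (pderiv q * rv (n-1) (pderiv q) - pderiv p * rv (n-1) (pderiv p)) \<le> 2 * (n-1)"
        using degA[OF dp'] degA[OF dq'] degree_diff_le by blast
      show "inj_on z {1..2 * (n-1) + 1}" using assms(7) e2 by simp
      fix j assume j: "j \<in> {1..2*(n-1)+1}"
      hence "norm (z j) = 1" "norm (poly (pderiv q) (z j)) = norm (poly (pderiv p) (z j))"
        using assms(6,9) e2 by auto
      thus "poly (pderiv q * rv (n-1) (pderiv q) - pderiv p * rv (n-1) (pderiv p)) (z j) = 0"
        using poly_A[OF _ dp'] poly_A[OF _ dq'] by simp
    qed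
    thus ?thesis by simp
  qed
  have hV: "vv r * rv n (vv r) = pCons 0 (pderiv r * rv (n-1) (pderiv r))" for r
    unfolding vv_def rv_pCons[OF n1] by simp
  have V: "vv q * rv n (vv q) = vv p * rv n (vv p)" using hV hB by simp
  have I: "II n q = II n p" unfolding II_eq hA ..
  have sq: "(RR n r)^2 = (II n r)^2 + 4 * (r * rv n r) * (vv r * rv n (vv r))" for r
    unfolding RR_def II_def by (simp add: power2_eq_square algebra_simps)
  have "(RR n q)^2 = (RR n p)^2" unfolding sq I hA V ..
  hence "(RR n q - RR n p) * (RR n q + RR n p) = 0" by (simp add: power2_eq_square algebra_simps)
  hence "RR n q = RR n p \<or> RR n q = - RR n p" by (auto simp: eq_neg_iff_add_eq_0)
  hence R: "RR n q = RR n p"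
  proof
    assume h: "RR n q = - RR n p"
    have "coeff (RR n q) n = - coeff (RR n p) n" using h by simp
    hence "complex_of_real (2 * (\<Sum>i\<le>n. real i * (norm (coeff q i))^2)) =
       complex_of_real (- (2 * (\<Sum>i\<le>n. real i * (norm (coeff p i))^2)))"
      unfolding coeff_RR of_real_minus .
    hence "2 * (\<Sum>i\<le>n. real i * (norm (coeff q i))^2) = - (2 * (\<Sum>i\<le>n. real i * (norm (coeff p i))^2))"
      by (simp only: of_real_eq_iff)
    hence "(\<Sum>i\<le>n. real i * (norm (coeff q i))^2) = 0" "(\<Sum>i\<le>n. real i * (norm (coeff p i))^2) = 0"
      using RR_nonneg[where n=n and r=q] RR_nonneg[where n=n and r=p] by linarith+
    thus ?thesis using RR_zero dp dq by metis
  qed simp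
  have "RR n q + II n q = RR n p + II n p" using R I by simp
  hence "2 * (vv q * rv n q) = 2 * (vv p * rv n p)" unfolding RR_def II_def by (simp add: algebra_simps)
  hence W: "vv q * rv n q = vv p * rv n p" by simp
  show ?thesis
  proof (cases "p = 0")
    case True
    hence "q * rv n q = 0" using hA by simp
    hence "q = 0" using rv_eq_0[OF _ dq] by auto
    thus ?thesis using True by simp
  next
    case False
    have rp: "rv n p \<noteq> 0" using rv_eq_0[OF _ dp] False by auto
    have "rv n p * (vv p * q - vv q * p) = vv q * (q * rv n q) - vv q * (p * rv n p)"
      using W by (simp add: algebra_simps)
    also have "\<dots> = 0" using hA by simp
    finally have "vv p * q = vv q * p" using rp by simp
    hence "pCons 0 (pderiv p * q) = pCons 0 (pderiv q * p)"
      unfolding vv_def by simp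
    hence "pderiv p * q = pderiv q * p" by simp
    then obtain c where c: "q = smult c p" using const_mult[OF False] by blast
    have Ap: "p * rv n p \<noteq> 0" using False rp by simp
    have "smult (c * cnj c) (p * rv n p) = p * rv n p"
      using hA unfolding c rv_smult mult_smult_left mult_smult_right smult_smult
      by (simp add: mult.commute)
    hence "smult (c * cnj c - 1) (p * rv n p) = 0" by (simp add: smult_diff_left)
    hence cc: "c * cnj c = 1" using Ap by simp
    have "norm c * norm c = 1"
    proof -
      have "norm (c * cnj c) = 1" using cc by simp
      thus ?thesis by (simp add: norm_mult)
    qed
    hence "(norm c)^2 = 1" by (simp add: power2_eq_square)
    hence "norm c = 1 \<or> norm c = -1" by (simp only: power2_eq_1_iff)
    hence "norm c = 1" using norm_ge_zero[of c] by linarith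
    moreover have "c \<noteq> 0" using cc by auto
    ultimately have "c = exp (\<i> * complex_of_real (Arg c))" using Arg_eq[of c] by simp
    thus ?thesis using c by (intro exI[of _ "Arg c"]) simp
  qed
qed

end
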